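(* Let $w=\{w_j\}_{j\in\mathbb{Z}}$ be a bounded sequence of non-zero elements of $\mathbb{K}\in\{\mathbb{R},\mathbb{C}\}$. If $\liminf_{n\to\infty}\prod_{j=-n+1}^{0}|w_j|=0$, then there exists a sequence $\{p_n\}$ in $\mathbb{N}$ such that $\lim_{n\to\infty}\prod_{j=-p_n+k+1}^{k}|w_j|=0$ for all $k\in\mathbb{Z}$. *)

theory Defs
  imports "HOL-Analysis.Analysis"
begin

definition cor311_claim :: "'a::real_normed_field itself \<Rightarrow> bool" where
  "cor311_claim _ \<longleftrightarrow>
    (\<forall>w :: int \<Rightarrow> 'a.
       bounded (range w) \<longrightarrow> (\<forall>j. w j \<noteq> 0) \<longrightarrow>
       liminf (\<lambda>n::nat. ereal (\<Prod>j\<in>{-int n + 1..0}. norm (w j))) = 0 \<longrightarrow>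
       (\<exists>p :: nat \<Rightarrow> nat. \<forall>k::int.
          (\<lambda>n. \<Prod>j\<in>{k - int (p n) + 1..k}. norm (w j)) \<longlonglongrightarrow> 0))"

end

theory Submission
  imports Defs
begin

lemma prod_split_int:
  fixes f :: "int \<Rightarrow> real"
  assumes "lo - 1 \<le> mid" "mid \<le> hi"
  shows "prod f {lo..hi} = prod f {lo..mid} * prod f {mid+1..hi}"
proof -
  have "{lo..hi} = {lo..mid} \<union> {mid+1..hi}" using assms by auto
  moreover have "{lo..mid} \<inter> {mid+1..hi} = {}" by auto
  ultimately show ?thesis by (simp add: prod.union_disjoint)
qed

lemma prod_bound_int:
  fixes f :: "int \<Rightarrow> real"
  assumes "\<And>j. 0 \<le> f j" "\<And>j. f j \<le> M"
  shows "prod f {lo..hi} \<le> M ^ nat (hi - lo + 1)"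
proof -
  have "prod f {lo..hi} \<le> prod (\<lambda>_. M) {lo..hi}"
    by (rule prod_mono) (use assms in auto)
  also have "\<dots> = M ^ nat (hi - lo + 1)" by simp
  finally show ?thesis .
qed

lemma claim_general: "cor311_claim (TYPE('a::real_normed_field))"
  unfolding cor311_claim_def
proof (intro allI impI)
  fix w :: "int \<Rightarrow> 'a"
  assume bd: "bounded (range w)" and nz: "\<forall>j. w j \<noteq> 0"
    and li: "liminf (\<lambda>n::nat. ereal (\<Prod>j\<in>{-int n + 1..0}. norm (w j))) = 0"
  define f where "f j = norm (w j)" for j
  define P where "P lo hi = prod f {lo..hi}" for lo hi
  have fpos: "\<And>j. 0 < f j" using nz by (simp add: f_def)
  obtain B where B: "\<And>j. norm (w j) \<le> B" using bd unfolding bounded_iff by auto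
  define M where "M = max 1 B"
  have M1: "1 \<le> M" by (simp add: M_def)
  have fM: "\<And>j. f j \<le> M" using B by (simp add: f_def M_def max.coboundedI2)
  have Ppos: "\<And>lo hi. 0 < P lo hi" unfolding P_def using fpos by (simp add: prod_pos)
  have Pb: "\<And>lo hi. P lo hi \<le> M ^ nat (hi - lo + 1)"
    unfolding P_def by (rule prod_bound_int) (use fpos fM in \<open>auto intro: less_imp_le\<close>)
  have Psplit: "\<And>lo mid hi. lo - 1 \<le> mid \<Longrightarrow> mid \<le> hi \<Longrightarrow> P lo hi = P lo mid * P (mid+1) hi"
    unfolding P_def by (rule prod_split_int)
  define a where "a m = P (- int m + 1) 0" for m :: nat
  have small: "\<exists>m. a m < d" if "d > 0" for d
  proof (rule ccontr)
    assume "\<not> ?thesis"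
    hence "\<forall>m. d \<le> a m" by (meson not_less)
    hence "ereal d \<le> liminf (\<lambda>n::nat. ereal (\<Prod>j\<in>{-int n + 1..0}. norm (w j)))"
      by (intro Liminf_bounded always_eventually) (auto simp: a_def P_def f_def)
    with li that show False by simp
  qed
  have "\<forall>n. \<exists>m. a m < 1 / ((real n + 1) * M ^ (2*n))"
    using M1 by (intro allI small) (simp add: zero_less_mult_iff)
  then obtain mm where mm: "\<And>n. a (mm n) < 1 / ((real n + 1) * M ^ (2*n))" by metis
  define p where "p n = mm n + n" for n
  show "\<exists>p :: nat \<Rightarrow> nat. \<forall>k::int.
          (\<lambda>n. \<Prod>j\<in>{k - int (p n) + 1..k}. norm (w j)) \<longlonglongrightarrow> 0"
  proof (intro exI allI)
    fix k :: int
    define c where "c = P (k+1) 0"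
    define d where "d = P 1 k"
    have cpos: "c > 0" using Ppos by (simp add: c_def)
    have dpos: "d > 0" using Ppos by (simp add: d_def)
    define C where "C = d / c"
    have key: "P (k - int (p n) + 1) k \<le> C * inverse (real (Suc n))" if nk: "nat \<bar>k\<bar> \<le> n" for n
    proof -
      define m where "m = mm n"
      define T where "T = P (k - int (p n) + 1) k"
      have pn: "int (p n) = int m + int n" by (simp add: p_def m_def)
      have eq: "T * c = P (k - int (p n) + 1) (- int m) * a m * d"
      proof (cases "k \<le> 0")
        case True
        have d1: "d = 1" using True by (simp add: d_def P_def)
        have "T * c = P (k - int (p n) + 1) 0"
          unfolding T_def c_def using True nk pn by (intro Psplit[symmetric]) auto
        also have "\<dots> = P (k - int (p n) + 1) (- int m) * a m"
          unfolding a_def using True nk pn by (intro Psplit) auto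
        finally show ?thesis by (simp add: d1)
      next
        case False
        have c1: "c = 1" using False by (simp add: c_def P_def)
        have "T = P (k - int (p n) + 1) 0 * d"
          unfolding T_def d_def using Psplit[of "k - int (p n) + 1" 0 k] False nk pn by simp
        also have "P (k - int (p n) + 1) 0 = P (k - int (p n) + 1) (- int m) * a m"
          unfolding a_def using False nk pn by (intro Psplit) auto
        finally show ?thesis by (simp add: c1)
      qed
      have b1: "P (k - int (p n) + 1) (- int m) \<le> M ^ (2*n)"
      proof -
        have "P (k - int (p n) + 1) (- int m) \<le> M ^ nat (- int m - (k - int (p n) + 1) + 1)"
          by (rule Pb)
        also have "\<dots> \<le> M ^ (2*n)"
          using nk pn M1 by (intro power_increasing) auto
        finally show ?thesis .
      qed
      have am: "a m * ((real n + 1) * M ^ (2*n)) < 1"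
      proof -
        have pos: "0 < (real n + 1) * M ^ (2*n)" using M1 by (simp add: zero_less_mult_iff)
        have "a m < 1 / ((real n + 1) * M ^ (2*n))" using mm[of n] by (simp add: m_def)
        thus ?thesis using pos_less_divide_eq[OF pos] by blast
      qed
      have apos: "0 < a m" using Ppos by (simp add: a_def)
      have "T * c \<le> M ^ (2*n) * a m * d"
        unfolding eq using b1 apos dpos by (intro mult_right_mono) auto
      also have "\<dots> \<le> d / (real n + 1)"
      proof -
        have "M ^ (2*n) * a m \<le> 1 / (real n + 1)"
          using am by (simp add: field_simps)
        thus ?thesis using dpos by (simp add: divide_simps mult_right_mono)
      qed
      finally have "T * c \<le> d / (real n + 1)" .
      hence "T \<le> d / (real n + 1) / c" using pos_le_divide_eq[OF cpos] by blast
      moreover have "d / (real n + 1) / c = C * inverse (real (Suc n))"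
        by (simp add: C_def field_simps)
      ultimately show ?thesis by (simp add: T_def)
    qed
    have lim: "(\<lambda>n. C * inverse (real (Suc n))) \<longlonglongrightarrow> 0"
      using tendsto_mult_right_zero[OF LIMSEQ_inverse_real_of_nat] by simp
    have "(\<lambda>n. P (k - int (p n) + 1) k) \<longlonglongrightarrow> 0"
    proof (rule tendsto_sandwich[OF _ _ tendsto_const lim])
      show "\<forall>\<^sub>F n in sequentially. 0 \<le> P (k - int (p n) + 1) k"
        using Ppos by (intro always_eventually allI less_imp_le) auto
      show "\<forall>\<^sub>F n in sequentially. P (k - int (p n) + 1) k \<le> C * inverse (real (Suc n))"
        using eventually_ge_at_top[of "nat \<bar>k\<bar>"] by (rule eventually_mono) (rule key)
    qed
    thus "(\<lambda>n. \<Prod>j\<in>{k - int (p n) + 1..k}. norm (w j)) \<longlonglongrightarrow> 0"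
      by (simp add: P_def f_def)
  qed
qed

theorem corollary3p11:
  shows "cor311_claim TYPE(real) \<and> cor311_claim TYPE(complex)"
  using claim_general[where 'a=real] claim_general[where 'a=complex] by simp

end
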